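(* Let $n=2^\ell$, and let $S=\{u_1,\dots,u_m\}\subseteq\mathbb{F}_2^d\setminus\{0\}$ be a set of $m$ distinct nonzero vectors. Let $h:\mathbb{F}_2^d\to\mathbb{F}_2^\ell$ be a uniformly random linear map. Fix $y\in\mathbb{F}_2^\ell$ and define $Z_y:=|\{i:h(u_i)=y\}|$, and let $\lambda:=m/n$. Then for every integer $r\ge0$, with $a:=\lceil\log(r+2)\rceil$, \[ \Pr[Z_y>r]\le\lambda^a\left(\prod_{j=0}^{a-1}(r+2-2^j)\right)^{-1}. \]
   Context: $\log$ denotes the base-$2$ logarithm. A uniformly random linear map is chosen uniformly among all linear maps $\mathbb{F}_2^d\to\mathbb{F}_2^\ell$. *)

theory Defs
  imports "HOL-Probability.Probability"
begin

text \<open>Vectors of F_2^d are represented as functions nat => bool (True = 1) that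
vanish outside {0..<d}.  Addition is coordinatewise exclusive or.\<close>

definition F2vec :: "nat \<Rightarrow> (nat \<Rightarrow> bool) set" where
  "F2vec d = {x. \<forall>i. d \<le> i \<longrightarrow> \<not> x i}"

definition vzero :: "nat \<Rightarrow> bool" where
  "vzero = (\<lambda>_. False)"

definition vadd :: "(nat \<Rightarrow> bool) \<Rightarrow> (nat \<Rightarrow> bool) \<Rightarrow> (nat \<Rightarrow> bool)" where
  "vadd x y = (\<lambda>i. x i \<noteq> y i)"

text \<open>Linear maps F_2^d -> F_2^l (over F_2, additivity is linearity), made
extensional (value vzero outside F_2^d) so that the set of them is finite.\<close>

definition linmaps :: "nat \<Rightarrow> nat \<Rightarrow> ((nat \<Rightarrow> bool) \<Rightarrow> (nat \<Rightarrow> bool)) set" where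
  "linmaps d l = {h. (\<forall>x\<in>F2vec d. h x \<in> F2vec l)
                   \<and> (\<forall>x\<in>F2vec d. \<forall>y\<in>F2vec d. h (vadd x y) = vadd (h x) (h y))
                   \<and> (\<forall>x. x \<notin> F2vec d \<longrightarrow> h x = vzero)}"

end

theory Submission
  imports Defs "HOL-Library.Z2" "HOL-Library.Function_Algebras"
begin

lemma F2vec_eq: "F2vec l = (\<lambda>A i. i \<in> A) ` Pow {..<l}"
proof
  show "F2vec l \<subseteq> (\<lambda>A i. i \<in> A) ` Pow {..<l}"
  proof
    fix x assume x: "x \<in> F2vec l"
    have "x = (\<lambda>i. i \<in> {i. x i})" by simp
    moreover have "{i. x i} \<in> Pow {..<l}" using x unfolding F2vec_def
      by (auto simp: not_le[symmetric])
    ultimately show "x \<in> (\<lambda>A i. i \<in> A) ` Pow {..<l}" by blast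
  qed
qed (auto simp: F2vec_def)

lemma finite_F2vec: "finite (F2vec l)"
  unfolding F2vec_eq by simp

lemma card_F2vec: "card (F2vec l) = 2 ^ l"
proof -
  have "inj_on (\<lambda>A i. i \<in> A) (Pow {..<l})"
    by (rule inj_onI) (auto simp: fun_eq_iff)
  then show ?thesis unfolding F2vec_eq by (simp add: card_image card_Pow)
qed

lemma vzero_F2vec[simp]: "vzero \<in> F2vec l"
  by (simp add: F2vec_def vzero_def)

lemma vadd_F2vec[simp]: "x \<in> F2vec l \<Longrightarrow> y \<in> F2vec l \<Longrightarrow> vadd x y \<in> F2vec l"
  by (simp add: F2vec_def vadd_def)

lemma vadd_self[simp]: "vadd x x = vzero"
  by (simp add: vadd_def vzero_def)

lemma vadd_cancel[simp]: "vadd x (vadd x z) = z"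
  by (auto simp: vadd_def fun_eq_iff)

lemma vadd_cancel2[simp]: "vadd (vadd z x) x = z"
  by (auto simp: vadd_def fun_eq_iff)

lemma vadd_zero[simp]: "vadd x vzero = x" "vadd vzero x = x"
  by (auto simp: vadd_def vzero_def fun_eq_iff)

lemma zero_linmaps: "(\<lambda>_. vzero) \<in> linmaps d l"
  by (simp add: linmaps_def)

lemma finite_linmaps: "finite (linmaps d l)"
proof -
  let ?f = "\<lambda>h x. if x \<in> F2vec d then h x else vzero"
  have "linmaps d l \<subseteq> ?f ` (F2vec d \<rightarrow>\<^sub>E F2vec l)"
  proof
    fix h assume h: "h \<in> linmaps d l"
    have "h = ?f (restrict h (F2vec d))"
      using h by (auto simp: linmaps_def fun_eq_iff)
    moreover have "restrict h (F2vec d) \<in> F2vec d \<rightarrow>\<^sub>E F2vec l"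
      using h by (auto simp: linmaps_def)
    ultimately show "h \<in> ?f ` (F2vec d \<rightarrow>\<^sub>E F2vec l)" by blast
  qed
  moreover have "finite (F2vec d \<rightarrow>\<^sub>E F2vec l)"
    by (simp add: finite_PiE finite_F2vec)
  ultimately show ?thesis by (meson finite_imageI finite_subset)
qed

definition hadd :: "((nat \<Rightarrow> bool) \<Rightarrow> (nat \<Rightarrow> bool)) \<Rightarrow> ((nat \<Rightarrow> bool) \<Rightarrow> (nat \<Rightarrow> bool)) \<Rightarrow> ((nat \<Rightarrow> bool) \<Rightarrow> (nat \<Rightarrow> bool))" where
  "hadd h g = (\<lambda>x. vadd (h x) (g x))"

lemma vadd_swap4: "vadd (vadd a b) (vadd c e) = vadd (vadd a c) (vadd b e)"
  by (auto simp: vadd_def fun_eq_iff)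

lemma hadd_linmaps: "h \<in> linmaps d l \<Longrightarrow> g \<in> linmaps d l \<Longrightarrow> hadd h g \<in> linmaps d l"
  by (auto simp: linmaps_def hadd_def vadd_swap4)

section \<open>Vector space structure\<close>

definition sc :: "bit \<Rightarrow> (nat \<Rightarrow> bit) \<Rightarrow> (nat \<Rightarrow> bit)" where
  "sc c f = (\<lambda>i. c * f i)"

lemma vs_sc: "vector_space sc"
  by unfold_locales (auto simp: sc_def fun_eq_iff algebra_simps)

lemma vsp_sc: "vector_space_pair sc sc"
  by (simp add: vector_space_pair_def vs_sc)

interpretation V: vector_space sc by (rule vs_sc)

definition toB :: "(nat \<Rightarrow> bool) \<Rightarrow> (nat \<Rightarrow> bit)" where
  "toB x = (\<lambda>i. of_bool (x i))"

definition fromB :: "(nat \<Rightarrow> bit) \<Rightarrow> (nat \<Rightarrow> bool)" where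
  "fromB v = (\<lambda>i. v i = 1)"

lemma fromB_toB[simp]: "fromB (toB x) = x"
  by (simp add: fromB_def toB_def)

lemma toB_inj: "inj toB"
  by (metis fromB_toB injI)

lemma toB_vadd: "toB (vadd x y) = toB x + toB y"
  by (auto simp: toB_def vadd_def fun_eq_iff)

lemma fromB_add: "fromB (u + v) = vadd (fromB u) (fromB v)"
  unfolding fromB_def vadd_def plus_fun_def
  by (auto simp: fun_eq_iff)

lemma toB_vzero[simp]: "toB vzero = 0"
  by (simp add: toB_def vzero_def zero_fun_def)

lemma toB_eq_0: "toB x = 0 \<longleftrightarrow> x = vzero"
  by (metis fromB_toB toB_vzero)

lemma extend_lin:
  assumes ind: "V.independent (toB ` B)" and B: "B \<subseteq> F2vec d"
    and f: "\<forall>v\<in>B. f v \<in> F2vec l"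
  shows "\<exists>g\<in>linmaps d l. \<forall>v\<in>B. g v = f v"
proof -
  obtain G where G: "Vector_Spaces.linear sc sc G" and GB: "\<forall>x\<in>toB ` B. G x = toB (f (fromB x))"
    using vector_space_pair.linear_independent_extend[OF vsp_sc ind, where f="\<lambda>x. toB (f (fromB x))"] by blast
  have Gadd: "G (a + b) = G a + G b" for a b
    using G by (simp add: Vector_Spaces.linear_iff)
  define g where "g x = (if x \<in> F2vec d then (\<lambda>i. i < l \<and> fromB (G (toB x)) i) else vzero)" for x
  have "g \<in> linmaps d l"
    unfolding linmaps_def
  proof (intro CollectI conjI ballI allI impI)
    fix x assume "x \<in> F2vec d" then show "g x \<in> F2vec l"
      by (simp add: g_def F2vec_def)
  next
    fix x y assume x: "x \<in> F2vec d" and y: "y \<in> F2vec d"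
    have "vadd x y \<in> F2vec d" using x y by simp
    then have "g (vadd x y) = (\<lambda>i. i < l \<and> vadd (fromB (G (toB x))) (fromB (G (toB y))) i)"
      by (simp add: g_def toB_vadd Gadd fromB_add)
    then show "g (vadd x y) = vadd (g x) (g y)"
      using x y by (auto simp: g_def vadd_def fun_eq_iff)
  next
    fix x assume "x \<notin> F2vec d" then show "g x = vzero" by (simp add: g_def)
  qed
  moreover have "\<forall>v\<in>B. g v = f v"
  proof
    fix v assume v: "v \<in> B"
    then have "G (toB v) = toB (f v)" using GB by auto
    moreover have "v \<in> F2vec d" using v B by auto
    ultimately have "g v = (\<lambda>i. i < l \<and> f v i)" by (simp add: g_def)
    then show "g v = f v" using v f
      by (auto simp: F2vec_def fun_eq_iff)
  qed
  ultimately show ?thesis by blast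
qed

lemma UNIV_bit: "(UNIV :: bit set) = {0, 1}"
proof (rule UNIV_eq_I)
  fix x :: bit show "x \<in> {0, 1}" by (cases x) auto
qed

lemma finite_UNIV_bit[simp]: "finite (UNIV :: bit set)" by (simp add: UNIV_bit)

lemma card_UNIV_bit: "card (UNIV :: bit set) = 2"
proof -
  show ?thesis unfolding UNIV_bit by simp
qed

lemma span_sub:
  assumes "finite B"
  shows "V.span B \<subseteq> (\<lambda>u. \<Sum>v\<in>B. sc (u v) v) ` (B \<rightarrow>\<^sub>E (UNIV :: bit set))"
proof
  let ?F = "\<lambda>u. \<Sum>v\<in>B. sc (u v) v"
  fix x assume "x \<in> V.span B"
  then have "x \<in> range ?F" by (simp only: V.span_finite[OF assms])
  then obtain u where x: "x = ?F u" by (rule rangeE)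
  have e: "?F u = ?F (restrict u B)" by (rule sum.cong) simp_all
  have r: "restrict u B \<in> B \<rightarrow>\<^sub>E (UNIV :: bit set)" by simp
  show "x \<in> ?F ` (B \<rightarrow>\<^sub>E (UNIV :: bit set))" unfolding x e by (rule imageI[OF r])
qed

lemma finite_PiE_bit: "finite B \<Longrightarrow> finite (B \<rightarrow>\<^sub>E (UNIV :: bit set))"
  by (rule finite_PiE) auto

lemma finite_span:
  assumes "finite B"
  shows "finite (V.span B)"
  by (rule finite_subset[OF span_sub[OF assms]]) (rule finite_imageI[OF finite_PiE_bit[OF assms]])

lemma card_span_le:
  assumes "finite B"
  shows "card (V.span B) \<le> 2 ^ card B"
proof -
  have "card (V.span B) \<le> card ((\<lambda>u. \<Sum>v\<in>B. sc (u v) v) ` (B \<rightarrow>\<^sub>E (UNIV :: bit set)))"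
    by (rule card_mono[OF _ span_sub[OF assms]]) (rule finite_imageI[OF finite_PiE_bit[OF assms]])
  also have "\<dots> \<le> card (B \<rightarrow>\<^sub>E (UNIV :: bit set))" by (rule card_image_le[OF finite_PiE_bit[OF assms]])
  also have "\<dots> = 2 ^ card B"
    using assms by (simp add: card_PiE card_UNIV_bit)
  finally show ?thesis .
qed

definition indep :: "(nat \<Rightarrow> bool) list \<Rightarrow> bool" where
  "indep vs \<longleftrightarrow> distinct vs \<and> V.independent (toB ` set vs)"

lemma indep_Cons_mono: "indep (t # vs) \<Longrightarrow> indep vs"
  unfolding indep_def using V.independent_mono[OF _ subset_insertI] by auto

lemma indep_ConsI:
  assumes "indep vs" "toB t \<notin> V.span (toB ` set vs)"
  shows "indep (t # vs)"
proof -
  have "t \<notin> set vs" using assms(2) V.span_base by blast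
  have i: "V.independent (insert (toB t) (toB ` set vs))"
    using V.independent_insertI[OF assms(2)] assms(1) unfolding indep_def by blast
  have e: "toB ` set (t # vs) = insert (toB t) (toB ` set vs)" by simp
  have d: "distinct (t # vs)" using \<open>t \<notin> set vs\<close> assms(1) unfolding indep_def by simp
  show ?thesis unfolding indep_def e using d i by (rule conjI)
qed

lemma few_bad:
  assumes "indep vs" and T: "finite T" "vzero \<notin> T"
  shows "card {t\<in>T. \<not> indep (t # vs)} \<le> 2 ^ length vs - 1"
proof -
  have "{t\<in>T. \<not> indep (t # vs)} \<subseteq> {t\<in>T. toB t \<in> V.span (toB ` set vs)}"
    using indep_ConsI[OF assms(1)] by blast
  moreover have "inj_on toB {t\<in>T. toB t \<in> V.span (toB ` set vs)}"
    using toB_inj by (meson inj_on_subset subset_UNIV)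
  moreover have "toB ` {t\<in>T. toB t \<in> V.span (toB ` set vs)} \<subseteq> V.span (toB ` set vs) - {0}"
    using T(2) toB_eq_0 by auto
  moreover have "finite (V.span (toB ` set vs))"
    by (simp add: finite_span)
  ultimately have "card {t\<in>T. \<not> indep (t # vs)} \<le> card (V.span (toB ` set vs) - {0})"
  proof -
    assume a: "{t\<in>T. \<not> indep (t # vs)} \<subseteq> {t\<in>T. toB t \<in> V.span (toB ` set vs)}"
      "inj_on toB {t\<in>T. toB t \<in> V.span (toB ` set vs)}"
      "toB ` {t\<in>T. toB t \<in> V.span (toB ` set vs)} \<subseteq> V.span (toB ` set vs) - {0}"
      "finite (V.span (toB ` set vs))"
    have "card {t\<in>T. \<not> indep (t # vs)} \<le> card {t\<in>T. toB t \<in> V.span (toB ` set vs)}"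
      by (rule card_mono[OF _ a(1)]) (simp add: T(1))
    also have "\<dots> \<le> card (V.span (toB ` set vs) - {0})"
      by (rule card_inj_on_le[OF a(2) a(3)]) (simp add: a(4))
    finally show ?thesis .
  qed
  also have "\<dots> = card (V.span (toB ` set vs)) - 1"
    by (simp add: V.span_zero \<open>finite (V.span (toB ` set vs))\<close>)
  also have "card (V.span (toB ` set vs)) \<le> 2 ^ length vs"
  proof -
    have "card (toB ` set vs) = length vs" using assms(1)
      using card_image[OF inj_on_subset[OF toB_inj subset_UNIV], of "set vs"]
      by (simp add: indep_def distinct_card)
    then show ?thesis using card_span_le[of "toB ` set vs"] by simp
  qed
  ultimately show ?thesis by linarith
qed

definition lev :: "(nat \<Rightarrow> bool) set \<Rightarrow> nat \<Rightarrow> (nat \<Rightarrow> bool) list set" where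
  "lev T k = {vs. set vs \<subseteq> T \<and> length vs = k \<and> indep vs}"

lemma finite_lev: "finite T \<Longrightarrow> finite (lev T k)"
  unfolding lev_def
  by (rule finite_subset[OF _ finite_lists_length_eq[of T k]]) blast

lemma card_lev_le: "finite T \<Longrightarrow> card (lev T k) \<le> card T ^ k"
  unfolding lev_def
  using card_mono[OF finite_lists_length_eq[of T k], of "{vs. set vs \<subseteq> T \<and> length vs = k \<and> indep vs}"]
    card_lists_length_eq[of T k] by fastforce

lemma card_split_filter:
  assumes "finite A"
  shows "card {x\<in>A. P x} + card {x\<in>A. \<not> P x} = card A"
proof -
  have "A = {x\<in>A. P x} \<union> {x\<in>A. \<not> P x}" by blast
  moreover have "card ({x\<in>A. P x} \<union> {x\<in>A. \<not> P x}) = card {x\<in>A. P x} + card {x\<in>A. \<not> P x}"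
    by (rule card_Un_disjoint) (use assms in auto)
  ultimately show ?thesis by simp
qed

lemma lev_Suc:
  "lev T (Suc k) = (\<lambda>(vs, t). t # vs) ` (SIGMA vs:lev T k. {t\<in>T. indep (t # vs)})"
proof
  show "lev T (Suc k) \<subseteq> (\<lambda>(vs, t). t # vs) ` (SIGMA vs:lev T k. {t\<in>T. indep (t # vs)})"
  proof
    fix ws assume ws: "ws \<in> lev T (Suc k)"
    then obtain t vs where ws_eq: "ws = t # vs" unfolding lev_def by (cases ws) auto
    have "vs \<in> lev T k" using ws indep_Cons_mono unfolding ws_eq lev_def by auto
    moreover have "t \<in> T" "indep (t # vs)" using ws unfolding ws_eq lev_def by auto
    ultimately have "(vs, t) \<in> (SIGMA vs:lev T k. {t\<in>T. indep (t # vs)})" by blast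
    then show "ws \<in> (\<lambda>(vs, t). t # vs) ` (SIGMA vs:lev T k. {t\<in>T. indep (t # vs)})"
      unfolding ws_eq by (rule rev_image_eqI) simp
  qed
qed (auto simp: lev_def)

lemma card_lev:
  assumes T: "finite T" "vzero \<notin> T" "r + 1 \<le> card T"
    and k: "\<forall>j<k. 2 ^ j \<le> r + 1"
  shows "(\<Prod>j<k. r + 2 - 2 ^ j) \<le> card (lev T k)"
  using k
proof (induction k)
  case 0
  have "lev T 0 = {[]}" by (auto simp: lev_def indep_def V.independent_empty)
  then show ?case by simp
next
  case (Suc k)
  have IH: "(\<Prod>j<k. r + 2 - 2 ^ j) \<le> card (lev T k)" using Suc by simp
  have kk: "2 ^ k \<le> r + 1" using Suc.prems by simp
  have good: "r + 2 - 2 ^ k \<le> card {t\<in>T. indep (t # vs)}" if vs: "vs \<in> lev T k" for vs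
  proof -
    have "indep vs" "length vs = k" using vs by (auto simp: lev_def)
    then have "card {t\<in>T. \<not> indep (t # vs)} \<le> 2 ^ k - 1"
      using few_bad[of vs T] T by simp
    moreover have "card {t\<in>T. indep (t # vs)} + card {t\<in>T. \<not> indep (t # vs)} = card T"
      by (rule card_split_filter[OF T(1)])
    moreover have "(1::nat) \<le> 2 ^ k" by simp
    ultimately show ?thesis using T(3) kk by linarith
  qed
  have inj: "inj_on (\<lambda>(vs, t). t # vs) (SIGMA vs:lev T k. {t\<in>T. indep (t # vs)})"
    by (rule inj_onI) auto
  have "card (lev T (Suc k)) = card (SIGMA vs:lev T k. {t\<in>T. indep (t # vs)})"
    unfolding lev_Suc by (rule card_image[OF inj])
  also have "\<dots> = (\<Sum>vs\<in>lev T k. card {t\<in>T. indep (t # vs)})"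
    by (rule card_SigmaI) (use T(1) finite_lev in auto)
  also have "\<dots> \<ge> (\<Sum>vs\<in>lev T k. r + 2 - 2 ^ k)"
    by (rule sum_mono) (rule good)
  finally have "card (lev T k) * (r + 2 - 2 ^ k) \<le> card (lev T (Suc k))" by simp
  moreover have "(\<Prod>j<Suc k. r + 2 - 2 ^ j) = (\<Prod>j<k. r + 2 - 2 ^ j) * (r + 2 - 2 ^ k)"
    by simp
  moreover have "(\<Prod>j<k. r + 2 - 2 ^ j) * (r + 2 - 2 ^ k) \<le> card (lev T k) * (r + 2 - 2 ^ k)"
    using IH by (rule mult_right_mono) simp
  ultimately show ?case by linarith
qed

section \<open>Uniformity of linear maps on independent vectors\<close>

lemma fiber_bound:
  assumes ind: "indep vs" and sub: "set vs \<subseteq> F2vec d" and y: "y \<in> F2vec l"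
  shows "card {h\<in>linmaps d l. \<forall>v\<in>set vs. h v = y} * (2 ^ l) ^ length vs \<le> card (linmaps d l)"
proof -
  let ?L = "linmaps d l"
  let ?Fib = "{h\<in>?L. \<forall>v\<in>set vs. h v = y}"
  let ?Tg = "set vs \<rightarrow>\<^sub>E F2vec l"
  define g where "g t = (SOME g. g \<in> ?L \<and> (\<forall>v\<in>set vs. g v = vadd y (t v)))" for t
  have g: "g t \<in> ?L \<and> (\<forall>v\<in>set vs. g t v = vadd y (t v))" if t: "t \<in> ?Tg" for t
  proof -
    have "\<exists>g\<in>?L. \<forall>v\<in>set vs. g v = vadd y (t v)"
      by (rule extend_lin) (use ind sub t y in \<open>auto simp: indep_def PiE_iff intro!: vadd_F2vec\<close>)
    then show ?thesis unfolding g_def by (rule someI2_bex) blast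
  qed
  let ?phi = "\<lambda>(h, t). hadd h (g t)"
  have inj: "inj_on ?phi (?Fib \<times> ?Tg)"
  proof (rule inj_onI, clarify)
    fix h t h' t'
    assume h: "h \<in> ?L" "\<forall>v\<in>set vs. h v = y" and t: "t \<in> ?Tg"
      and h': "h' \<in> ?L" "\<forall>v\<in>set vs. h' v = y" and t': "t' \<in> ?Tg"
      and eq: "hadd h (g t) = hadd h' (g t')"
    have tv: "t v = t' v" if v: "v \<in> set vs" for v
    proof -
      have "hadd h (g t) v = t v" using h v g[OF t] by (simp add: hadd_def)
      moreover have "hadd h' (g t') v = t' v" using h' v g[OF t'] by (simp add: hadd_def)
      ultimately show ?thesis using eq by simp
    qed
    have tt: "t = t'" by (rule PiE_ext[OF t t' tv])
    have "h x = h' x" for x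
    proof -
      have "h x = vadd (hadd h (g t) x) (g t x)" by (simp add: hadd_def)
      also have "\<dots> = vadd (hadd h' (g t') x) (g t' x)" using eq tt by simp
      also have "\<dots> = h' x" by (simp add: hadd_def)
      finally show ?thesis .
    qed
    then show "h = h' \<and> t = t'" using tt by auto
  qed
  have img: "?phi ` (?Fib \<times> ?Tg) \<subseteq> ?L"
    using g hadd_linmaps by auto
  have "card (?Fib \<times> ?Tg) \<le> card ?L"
    by (rule card_inj_on_le[OF inj img finite_linmaps])
  moreover have "card ?Tg = (2 ^ l) ^ length vs"
  proof -
    have "card ?Tg = (\<Prod>i\<in>set vs. card (F2vec l))" by (rule card_PiE) simp
    also have "\<dots> = (2 ^ l) ^ card (set vs)" by (simp add: card_F2vec)
    also have "card (set vs) = length vs" using ind by (simp add: indep_def distinct_card)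
    finally show ?thesis .
  qed
  ultimately show ?thesis by (simp add: card_cartesian_product)
qed

lemma card_filter_sum: "finite A \<Longrightarrow> card {x\<in>A. P x} = (\<Sum>x\<in>A. if P x then 1 else 0::nat)"
  by (simp add: sum.If_cases Int_def)

theorem theoremB1:
  fixes d l r :: nat and S :: "(nat \<Rightarrow> bool) set" and y :: "nat \<Rightarrow> bool"
  assumes "S \<subseteq> F2vec d - {vzero}"
    and "y \<in> F2vec l"
  shows "measure_pmf.prob (pmf_of_set (linmaps d l))
           {h. card {u \<in> S. h u = y} > r}
         \<le> (real (card S) / 2 ^ l) ^ (nat \<lceil>log 2 (real r + 2)\<rceil>)
           / (\<Prod>j<nat \<lceil>log 2 (real r + 2)\<rceil>. (real r + 2 - 2 ^ j))"
proof -
  let ?L = "linmaps d l"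
  let ?Q = "\<lambda>h vs. \<forall>v\<in>set vs. h v = y"
  define a where "a = nat \<lceil>log 2 (real r + 2)\<rceil>"
  define Pn where "Pn = (\<Prod>j<a. r + 2 - 2 ^ j)"
  define Ind where "Ind = lev S a"
  define E where "E = {h. card {u \<in> S. h u = y} > r}"
  have SF: "S \<subseteq> F2vec d" using assms(1) by blast
  have fS: "finite S" by (rule finite_subset[OF SF finite_F2vec])
  have nz: "vzero \<notin> S" using assms(1) by blast
  have pow: "2 ^ j \<le> r + 1" if j: "j < a" for j
  proof -
    have lpos: "0 < log 2 (real r + 2)" by simp
    have "int j + 1 \<le> \<lceil>log 2 (real r + 2)\<rceil>" using j lpos unfolding a_def by linarith
    then have "real j + 1 \<le> real_of_int \<lceil>log 2 (real r + 2)\<rceil>" by linarith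
    then have "real j < log 2 (real r + 2)" using ceiling_correct[of "log 2 (real r + 2)"] by linarith
    then have "2 powr real j < 2 powr log 2 (real r + 2)" by (rule powr_less_mono) simp
    then have "real (2 ^ j) < real (r + 2)" by (simp add: powr_realpow)
    then show ?thesis by linarith
  qed
  have Preal: "(\<Prod>j<a. real r + 2 - 2 ^ j) = real Pn"
    unfolding Pn_def of_nat_prod
  proof (rule prod.cong)
    fix j assume "j \<in> {..<a}"
    then have "2 ^ j \<le> r + 2" using pow by fastforce
    then show "real r + 2 - 2 ^ j = real (r + 2 - 2 ^ j)" by (simp add: of_nat_diff)
  qed simp
  have Ppos: "0 < Pn" unfolding Pn_def
    by (rule prod_pos) (use pow in fastforce)
  have finInd: "finite Ind" unfolding Ind_def by (rule finite_lev[OF fS])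
  have A: "Pn \<le> card {vs\<in>Ind. ?Q h vs}" if h: "h \<in> ?L \<inter> E" for h
  proof -
    let ?T = "{u \<in> S. h u = y}"
    have "Pn \<le> card (lev ?T a)" unfolding Pn_def
      by (rule card_lev) (use fS nz h pow in \<open>auto simp: E_def\<close>)
    also have "\<dots> \<le> card {vs\<in>Ind. ?Q h vs}"
    proof (rule card_mono)
      show "finite {vs\<in>Ind. ?Q h vs}" using finInd by simp
      show "lev ?T a \<subseteq> {vs\<in>Ind. ?Q h vs}"
      proof
        fix vs assume "vs \<in> lev ?T a"
        then have v: "set vs \<subseteq> ?T" "length vs = a" "indep vs" by (simp_all add: lev_def)
        then have "set vs \<subseteq> S" "?Q h vs" by blast+
        then show "vs \<in> {vs\<in>Ind. ?Q h vs}" using v unfolding Ind_def lev_def by blast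
      qed
    qed
    finally show ?thesis .
  qed
  have B: "card (?L \<inter> E) * Pn \<le> (\<Sum>h\<in>?L. card {vs\<in>Ind. ?Q h vs})"
  proof -
    have "card (?L \<inter> E) * Pn = (\<Sum>h\<in>?L \<inter> E. Pn)" by simp
    also have "\<dots> \<le> (\<Sum>h\<in>?L \<inter> E. card {vs\<in>Ind. ?Q h vs})" by (rule sum_mono) (rule A)
    also have "\<dots> \<le> (\<Sum>h\<in>?L. card {vs\<in>Ind. ?Q h vs})"
      by (rule sum_mono2) (use finite_linmaps in auto)
    finally show ?thesis .
  qed
  have C: "(\<Sum>h\<in>?L. card {vs\<in>Ind. ?Q h vs}) = (\<Sum>vs\<in>Ind. card {h\<in>?L. ?Q h vs})"
  proof -
    have "(\<Sum>h\<in>?L. card {vs\<in>Ind. ?Q h vs}) = (\<Sum>h\<in>?L. \<Sum>vs\<in>Ind. if ?Q h vs then 1 else 0)"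
      by (rule sum.cong) (simp_all add: card_filter_sum[OF finInd])
    also have "\<dots> = (\<Sum>vs\<in>Ind. \<Sum>h\<in>?L. if ?Q h vs then 1 else 0)" by (rule sum.swap)
    also have "\<dots> = (\<Sum>vs\<in>Ind. card {h\<in>?L. ?Q h vs})"
      by (rule sum.cong) (simp_all add: card_filter_sum[OF finite_linmaps])
    finally show ?thesis .
  qed
  have D: "(\<Sum>vs\<in>Ind. card {h\<in>?L. ?Q h vs}) * (2 ^ l) ^ a \<le> card Ind * card ?L"
  proof -
    have "(\<Sum>vs\<in>Ind. card {h\<in>?L. ?Q h vs}) * (2 ^ l) ^ a = (\<Sum>vs\<in>Ind. card {h\<in>?L. ?Q h vs} * (2 ^ l) ^ a)"
      by (rule sum_distrib_right)
    also have "\<dots> \<le> (\<Sum>vs\<in>Ind. card ?L)"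
    proof (rule sum_mono)
      fix vs assume "vs \<in> Ind"
      then have "indep vs" "set vs \<subseteq> F2vec d" "length vs = a"
        using SF by (auto simp: Ind_def lev_def)
      then show "card {h\<in>?L. ?Q h vs} * (2 ^ l) ^ a \<le> card ?L"
        using fiber_bound[of vs d y l] assms(2) by simp
    qed
    also have "\<dots> = card Ind * card ?L" by simp
    finally show ?thesis .
  qed
  have key: "card (?L \<inter> E) * Pn * (2 ^ l) ^ a \<le> card S ^ a * card ?L"
  proof -
    have "card (?L \<inter> E) * Pn * (2 ^ l) ^ a \<le> (\<Sum>h\<in>?L. card {vs\<in>Ind. ?Q h vs}) * (2 ^ l) ^ a"
      by (rule mult_right_mono[OF B]) simp
    also have "\<dots> \<le> card Ind * card ?L" unfolding C by (rule D)
    also have "\<dots> \<le> card S ^ a * card ?L"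
      by (rule mult_right_mono) (simp_all add: Ind_def card_lev_le[OF fS])
    finally show ?thesis .
  qed
  have Lne: "?L \<noteq> {}" using zero_linmaps by blast
  have Npos: "0 < card ?L" using Lne finite_linmaps by (simp add: card_gt_0_iff)
  have prob: "measure_pmf.prob (pmf_of_set ?L) E = card (?L \<inter> E) / card ?L"
    by (rule measure_pmf_of_set[OF Lne finite_linmaps])
  have keyR: "real (card (?L \<inter> E)) * (real Pn * (2 ^ l) ^ a) \<le> real (card S) ^ a * real (card ?L)"
  proof -
    have "real (card (?L \<inter> E) * Pn * (2 ^ l) ^ a) \<le> real (card S ^ a * card ?L)"
      using key by (rule of_nat_mono)
    then show ?thesis by (simp add: mult.assoc)
  qed
  have Qpos: "0 < real Pn * (2 ^ l) ^ a" using Ppos by simp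
  have "real (card (?L \<inter> E)) / card ?L \<le> (real (card S) / 2 ^ l) ^ a / real Pn"
  proof -
    have "(real (card S) / 2 ^ l) ^ a / real Pn = real (card S) ^ a / (real Pn * (2 ^ l) ^ a)"
      by (simp add: power_divide)
    moreover have "real (card (?L \<inter> E)) / card ?L \<le> real (card S) ^ a / (real Pn * (2 ^ l) ^ a)"
      using keyR Qpos Npos by (simp add: divide_le_eq le_divide_eq mult.commute mult.left_commute)
    ultimately show ?thesis by simp
  qed
  then show ?thesis unfolding prob E_def[symmetric] a_def[symmetric] Preal by simp
qed

end
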